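(* Let $\zeta\in\mathbb{C}$ with $|\zeta|<1$, and let $\alpha_0=\zeta$ and $\alpha_j=0$ for $j\ge1$ (Bernstein–Szegő polynomials). Then for nonnegative integers $n,m,r,s$, \[ \mu_{n,m}=\begin{cases}\delta_{n,m}&\text{if } n\le m,\\ \zeta^{n-m}&\text{if } n>m,\end{cases}\qquad \mu_{n,r,s}=\begin{cases}\mu_{n,s}&\text{if } r=0,\\ \delta_{s,n+r}&\text{if } r>0.\end{cases} \]
   Context: For a polynomial $f(z)=\sum_{k=0}^n a_kz^k$ of degree $n$, write $\overline{f}(z)=\sum_k\overline{a_k}z^k$ and $f^*(z)=z^n\overline{f}(1/z)$. Given $(\alpha_n)$ with $|\alpha_n|<1$, define monic $\Phi_n$ by $\Phi_0=1$, $\Phi_{n+1}(z)=z\Phi_n(z)-\overline{\alpha_n}\Phi_n^*(z)$. Let $\mathcal{L}$ be the unique linear functional on Laurent polynomials with $\mathcal{L}(1)=1$ and $\mathcal{L}(\Phi_m(z)\overline{\Phi_n}(1/z))=0$ for $m\neq n$; set $\langle f,g\rangle=\mathcal{L}(f(z)\overline{g}(1/z))$, $\mu_{n,r,s}=\langle\Phi_s(z),z^n\Phi_r(z)\rangle/\langle\Phi_s,\Phi_s\rangle$ and $\mu_{n,m}=\mu_{n,0,m}$. *)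

theory Defs
  imports Complex_Main "HOL-Computational_Algebra.Polynomial"
begin

text \<open>f^*(z) = z^n conj-f(1/z), n = degree f: coefficient j is cnj (coeff f (n - j)).\<close>
definition pstar :: "complex poly \<Rightarrow> complex poly" where
  "pstar f = Poly (map (\<lambda>k. cnj (coeff f (degree f - k))) [0..<Suc (degree f)])"

fun OPUC :: "(nat \<Rightarrow> complex) \<Rightarrow> nat \<Rightarrow> complex poly" where
  "OPUC \<alpha> 0 = 1"
| "OPUC \<alpha> (Suc n) = [:0, 1:] * OPUC \<alpha> n - smult (cnj (\<alpha> n)) (pstar (OPUC \<alpha> n))"

text \<open>Laurent polynomials: finitely supported coefficient functions on the integers.\<close>
definition laurent :: "(int \<Rightarrow> complex) set" where
  "laurent = {p. finite {k. p k \<noteq> 0}}"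

definition laurent_linear :: "((int \<Rightarrow> complex) \<Rightarrow> complex) \<Rightarrow> bool" where
  "laurent_linear L \<longleftrightarrow>
     (\<forall>p\<in>laurent. \<forall>q\<in>laurent. L (\<lambda>k. p k + q k) = L p + L q) \<and>
     (\<forall>c. \<forall>p\<in>laurent. L (\<lambda>k. c * p k) = c * L p)"

definition laurent_one :: "int \<Rightarrow> complex" where
  "laurent_one = (\<lambda>k. if k = 0 then 1 else 0)"

text \<open>Coefficients of the Laurent polynomial f(z) * conj-g(1/z).\<close>
definition lprod :: "complex poly \<Rightarrow> complex poly \<Rightarrow> int \<Rightarrow> complex" where
  "lprod f g = (\<lambda>k. \<Sum>i\<le>degree f. \<Sum>j\<le>degree g.
      if int i - int j = k then coeff f i * cnj (coeff g j) else 0)"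

definition ip :: "((int \<Rightarrow> complex) \<Rightarrow> complex) \<Rightarrow> complex poly \<Rightarrow> complex poly \<Rightarrow> complex" where
  "ip L f g = L (lprod f g)"

definition mu :: "((int \<Rightarrow> complex) \<Rightarrow> complex) \<Rightarrow> (nat \<Rightarrow> complex) \<Rightarrow> nat \<Rightarrow> nat \<Rightarrow> nat \<Rightarrow> complex" where
  "mu L \<alpha> n r s = ip L (OPUC \<alpha> s) (monom 1 n * OPUC \<alpha> r) / ip L (OPUC \<alpha> s) (OPUC \<alpha> s)"

end

theory Submission
  imports Defs
begin

definition lmon :: "int \<Rightarrow> int \<Rightarrow> complex" where
  "lmon m = (\<lambda>k. if k = m then 1 else 0)"

lemma lmon_laurent: "lmon m \<in> laurent"
proof -
  have "{k. lmon m k \<noteq> 0} \<subseteq> {m}" by (auto simp: lmon_def)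
  then show ?thesis unfolding laurent_def by (auto intro: finite_subset)
qed

lemma scale_laurent: "p \<in> laurent \<Longrightarrow> (\<lambda>k. c * p k) \<in> laurent"
proof -
  assume "p \<in> laurent"
  moreover have "{k. c * p k \<noteq> 0} \<subseteq> {k. p k \<noteq> 0}" by auto
  ultimately show ?thesis unfolding laurent_def by (auto intro: finite_subset)
qed

lemma L_add: "laurent_linear L \<Longrightarrow> p \<in> laurent \<Longrightarrow> q \<in> laurent \<Longrightarrow> L (\<lambda>k. p k + q k) = L p + L q"
  unfolding laurent_linear_def by blast

lemma L_scale: "laurent_linear L \<Longrightarrow> p \<in> laurent \<Longrightarrow> L (\<lambda>k. c * p k) = c * L p"
  unfolding laurent_linear_def by blast

lemma L_zero: "laurent_linear L \<Longrightarrow> L (\<lambda>k. 0) = 0"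
proof -
  assume a: "laurent_linear L"
  have z: "(\<lambda>k::int. 0::complex) \<in> laurent" by (simp add: laurent_def)
  have "L (\<lambda>k. 0 * (\<lambda>k::int. 0::complex) k) = 0 * L (\<lambda>k. 0)"
    by (rule L_scale[OF a z])
  then show ?thesis by simp
qed

lemma L_sum:
  assumes lin: "laurent_linear L" and fin: "finite S"
  shows "(\<forall>x\<in>S. p x \<in> laurent) \<Longrightarrow>
    L (\<lambda>k. \<Sum>x\<in>S. p x k) = (\<Sum>x\<in>S. L (p x)) \<and> (\<lambda>k. \<Sum>x\<in>S. p x k) \<in> laurent"
  using fin
proof (induction S rule: finite_induct)
  case empty
  then show ?case using L_zero[OF lin] by (simp add: laurent_def)
next
  case (insert x F)
  then have IH: "L (\<lambda>k. \<Sum>x\<in>F. p x k) = (\<Sum>x\<in>F. L (p x))" "(\<lambda>k. \<Sum>x\<in>F. p x k) \<in> laurent"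
    and px: "p x \<in> laurent" by auto
  have eq: "(\<lambda>k. \<Sum>x\<in>insert x F. p x k) = (\<lambda>k. p x k + (\<lambda>k. \<Sum>x\<in>F. p x k) k)"
    using insert by auto
  have "L (\<lambda>k. p x k + (\<lambda>k. \<Sum>x\<in>F. p x k) k) = L (p x) + L (\<lambda>k. \<Sum>x\<in>F. p x k)"
    by (rule L_add[OF lin px IH(2)])
  moreover have "(\<lambda>k. p x k + (\<lambda>k. \<Sum>x\<in>F. p x k) k) \<in> laurent"
  proof -
    have "{k. p x k + (\<Sum>x\<in>F. p x k) \<noteq> 0} \<subseteq> {k. p x k \<noteq> 0} \<union> {k. (\<Sum>x\<in>F. p x k) \<noteq> 0}"
      by auto
    then show ?thesis using px IH(2) unfolding laurent_def by (auto intro: finite_subset)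
  qed
  ultimately show ?case using eq IH(1) insert by simp
qed

lemma lprod_bound:
  assumes "degree f \<le> A" "degree g \<le> B"
  shows "lprod f g = (\<lambda>k. \<Sum>i\<le>A. \<Sum>j\<le>B. coeff f i * cnj (coeff g j) * lmon (int i - int j) k)"
proof
  fix k
  have "lprod f g k = (\<Sum>i\<le>degree f. \<Sum>j\<le>degree g. coeff f i * cnj (coeff g j) * lmon (int i - int j) k)"
    unfolding lprod_def lmon_def by (intro sum.cong refl) auto
  also have "\<dots> = (\<Sum>i\<le>A. \<Sum>j\<le>degree g. coeff f i * cnj (coeff g j) * lmon (int i - int j) k)"
    by (rule sum.mono_neutral_left) (use assms in \<open>auto simp: coeff_eq_0\<close>)
  also have "\<dots> = (\<Sum>i\<le>A. \<Sum>j\<le>B. coeff f i * cnj (coeff g j) * lmon (int i - int j) k)"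
    by (intro sum.cong refl sum.mono_neutral_left) (use assms in \<open>auto simp: coeff_eq_0\<close>)
  finally show "lprod f g k = \<dots>" .
qed

lemma ip_formula:
  assumes lin: "laurent_linear L" and "degree f \<le> A" "degree g \<le> B"
  shows "ip L f g = (\<Sum>i\<le>A. \<Sum>j\<le>B. coeff f i * cnj (coeff g j) * L (lmon (int i - int j)))"
proof -
  have sc: "L (\<lambda>k. c * lmon m k) = c * L (lmon m)" for c m
    using lin lmon_laurent unfolding laurent_linear_def by blast
  have inner: "L (\<lambda>k. \<Sum>j\<le>B. coeff f i * cnj (coeff g j) * lmon (int i - int j) k)
     = (\<Sum>j\<le>B. coeff f i * cnj (coeff g j) * L (lmon (int i - int j)))
     \<and> (\<lambda>k. \<Sum>j\<le>B. coeff f i * cnj (coeff g j) * lmon (int i - int j) k) \<in> laurent" for i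
    using L_sum[OF lin, of "{..B}" "\<lambda>j k. coeff f i * cnj (coeff g j) * lmon (int i - int j) k"]
    by (simp add: sc scale_laurent lmon_laurent)
  have "ip L f g = L (\<lambda>k. \<Sum>i\<le>A. (\<lambda>i k. \<Sum>j\<le>B. coeff f i * cnj (coeff g j) * lmon (int i - int j) k) i k)"
    unfolding ip_def using lprod_bound[OF assms(2,3)] by simp
  also have "\<dots> = (\<Sum>i\<le>A. L (\<lambda>k. \<Sum>j\<le>B. coeff f i * cnj (coeff g j) * lmon (int i - int j) k))"
    using L_sum[OF lin, of "{..A}" "\<lambda>i k. \<Sum>j\<le>B. coeff f i * cnj (coeff g j) * lmon (int i - int j) k"] inner by simp
  also have "\<dots> = (\<Sum>i\<le>A. \<Sum>j\<le>B. coeff f i * cnj (coeff g j) * L (lmon (int i - int j)))"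
    using inner by simp
  finally show ?thesis .
qed


lemma ip_diff_left:
  assumes lin: "laurent_linear L"
  shows "ip L (f - g) h = ip L f h - ip L g h"
proof -
  let ?A = "max (degree f) (degree g)"
  have d: "degree (f - g) \<le> ?A" by (rule degree_diff_le_max)
  have 1: "ip L (f - g) h = (\<Sum>i\<le>?A. \<Sum>j\<le>degree h. coeff (f - g) i * cnj (coeff h j) * L (lmon (int i - int j)))"
    by (rule ip_formula[OF lin d order.refl])
  have 2: "ip L f h = (\<Sum>i\<le>?A. \<Sum>j\<le>degree h. coeff f i * cnj (coeff h j) * L (lmon (int i - int j)))"
    by (rule ip_formula[OF lin max.cobounded1 order.refl])
  have 3: "ip L g h = (\<Sum>i\<le>?A. \<Sum>j\<le>degree h. coeff g i * cnj (coeff h j) * L (lmon (int i - int j)))"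
    by (rule ip_formula[OF lin max.cobounded2 order.refl])
  show ?thesis unfolding 1 2 3
    by (simp add: ring_distribs sum_subtractf)
qed

lemma ip_diff_right:
  assumes lin: "laurent_linear L"
  shows "ip L h (f - g) = ip L h f - ip L h g"
proof -
  let ?A = "max (degree f) (degree g)"
  have d: "degree (f - g) \<le> ?A" by (rule degree_diff_le_max)
  have 1: "ip L h (f - g) = (\<Sum>i\<le>degree h. \<Sum>j\<le>?A. coeff h i * cnj (coeff (f - g) j) * L (lmon (int i - int j)))"
    by (rule ip_formula[OF lin order.refl d])
  have 2: "ip L h f = (\<Sum>i\<le>degree h. \<Sum>j\<le>?A. coeff h i * cnj (coeff f j) * L (lmon (int i - int j)))"
    by (rule ip_formula[OF lin order.refl max.cobounded1])
  have 3: "ip L h g = (\<Sum>i\<le>degree h. \<Sum>j\<le>?A. coeff h i * cnj (coeff g j) * L (lmon (int i - int j)))"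
    by (rule ip_formula[OF lin order.refl max.cobounded2])
  show ?thesis unfolding 1 2 3
    by (simp add: ring_distribs sum_subtractf)
qed

lemma ip_smult_left:
  assumes lin: "laurent_linear L"
  shows "ip L (smult x f) h = x * ip L f h"
  unfolding ip_formula[OF lin degree_smult_le order.refl] ip_formula[OF lin order.refl order.refl]
  by (simp add: sum_distrib_left mult.assoc)

lemma ip_smult_right:
  assumes lin: "laurent_linear L"
  shows "ip L h (smult x f) = cnj x * ip L h f"
  unfolding ip_formula[OF lin order.refl degree_smult_le] ip_formula[OF lin order.refl order.refl]
  by (simp add: sum_distrib_left algebra_simps)

lemma ip_monom:
  assumes lin: "laurent_linear L"
  shows "ip L (monom 1 a) (monom 1 b) = L (lmon (int a - int b))"
proof -
  have "ip L (monom 1 a) (monom 1 b) = (\<Sum>i\<le>a. \<Sum>j\<le>b. (if j = b then (if i = a then L (lmon (int i - int j)) else 0) else 0))"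
    unfolding ip_formula[OF lin degree_monom_le degree_monom_le]
    by (intro sum.cong refl) (simp add: coeff_monom)
  also have "\<dots> = L (lmon (int a - int b))" by simp
  finally show ?thesis .
qed

lemma pstar_one: "pstar 1 = 1"
  by (simp add: pstar_def)

lemma OPUC_BS:
  "OPUC (\<lambda>j::nat. if j = 0 then z else 0) (Suc k) = monom 1 (Suc k) - smult (cnj z) (monom 1 k)"
proof (induction k)
  case 0
  then show ?case by (simp add: pstar_one monom_Suc)
next
  case (Suc k)
  then show ?case by (simp add: monom_Suc algebra_simps)
qed


lemma monom_mult_BS:
  fixes w :: complex shows "monom 1 n * (monom 1 (Suc k) - smult w (monom 1 k)) = monom 1 (Suc (n + k)) - smult w (monom 1 (n + k))"
proof -
  have 1: "monom 1 n * monom 1 (Suc k) = monom (1::complex) (Suc (n + k))" by (simp add: mult_monom)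
  have 2: "monom 1 n * smult w (monom 1 k) = smult w (monom 1 (n + k))" by (simp add: mult_monom)
  show ?thesis by (simp only: right_diff_distrib 1 2)
qed

theorem proposition4p4:
  fixes \<zeta> :: complex and L :: "(int \<Rightarrow> complex) \<Rightarrow> complex" and n m r s :: nat
  defines "\<alpha> \<equiv> (\<lambda>j::nat. if j = 0 then \<zeta> else 0)"
  assumes "norm \<zeta> < 1"
    and "laurent_linear L"
    and "L laurent_one = 1"
    and "\<And>a b. a \<noteq> b \<Longrightarrow> L (lprod (OPUC \<alpha> a) (OPUC \<alpha> b)) = 0"
  shows "mu L \<alpha> n 0 m = (if n \<le> m then (if n = m then 1 else 0) else \<zeta> ^ (n - m)) \<and>
         mu L \<alpha> n r s = (if r = 0 then mu L \<alpha> n 0 s else (if s = n + r then 1 else 0))"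
proof -
  note lin = assms(3)
  define c where "c k = L (lmon k)" for k
  define P where "P a = monom 1 (Suc a) - smult (cnj \<zeta>) (monom 1 a)" for a
  have Phi0: "OPUC \<alpha> 0 = monom 1 0" by (simp add: monom_0 one_pCons)
  have PhiS: "OPUC \<alpha> (Suc k) = P k" for k unfolding \<alpha>_def P_def by (rule OPUC_BS)
  have orth: "ip L (OPUC \<alpha> a) (OPUC \<alpha> b) = 0" if "a \<noteq> b" for a b
    unfolding ip_def using assms(5) that by blast
  have ipm: "ip L (monom 1 a) (monom 1 b) = c (int a - int b)" for a b
    unfolding c_def by (rule ip_monom[OF lin])
  have ipPm: "ip L (P a) (monom 1 b) = c (int (Suc a) - int b) - cnj \<zeta> * c (int a - int b)" for a b
    unfolding P_def by (simp add: ip_diff_left[OF lin] ip_smult_left[OF lin] ipm)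
  have ipmP: "ip L (monom 1 b) (P a) = c (int b - int (Suc a)) - \<zeta> * c (int b - int a)" for a b
    unfolding P_def by (simp add: ip_diff_right[OF lin] ip_smult_right[OF lin] ipm)
  have ipPP: "ip L (P b) (P a) = ip L (P b) (monom 1 (Suc a)) - \<zeta> * ip L (P b) (monom 1 a)" for a b
    by (subst (2) P_def) (simp add: ip_diff_right[OF lin] ip_smult_right[OF lin])
  have c0: "c 0 = 1" unfolding c_def using assms(4) by (simp add: lmon_def laurent_one_def)
  have cpos: "c (int k) = cnj \<zeta> ^ k" for k
  proof (induction k)
    case 0 then show ?case using c0 by simp
  next
    case (Suc k)
    have "ip L (OPUC \<alpha> (Suc k)) (OPUC \<alpha> 0) = 0" by (rule orth) simp
    then have "c (int (Suc k)) - cnj \<zeta> * c (int k) = 0" unfolding PhiS Phi0 ipPm by simp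
    then show ?case using Suc by simp
  qed
  have cneg: "c (- int k) = \<zeta> ^ k" for k
  proof (induction k)
    case 0 then show ?case using c0 by simp
  next
    case (Suc k)
    have "ip L (OPUC \<alpha> 0) (OPUC \<alpha> (Suc k)) = 0" by (rule orth) simp
    then have "c (- int (Suc k)) - \<zeta> * c (- int k) = 0" unfolding PhiS Phi0 ipmP by simp
    then show ?case using Suc by simp
  qed
  have G1: "ip L (P a) (monom 1 j) = 0" if "j \<le> a" for a j
  proof -
    have e1: "int (Suc a) - int j = int (Suc a - j)" "int a - int j = int (a - j)" using that by auto
    have "Suc a - j = Suc (a - j)" using that by simp
    then show ?thesis unfolding ipPm e1 cpos by simp
  qed
  have G2: "ip L (P a) (monom 1 j) = \<zeta> ^ (j - Suc a) * (1 - cnj \<zeta> * \<zeta>)" if "a < j" for a j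
  proof -
    have e1: "int (Suc a) - int j = - int (j - Suc a)" "int a - int j = - int (j - a)" using that by auto
    have "j - a = Suc (j - Suc a)" using that by simp
    then show ?thesis unfolding ipPm e1 cneg by (simp add: algebra_simps)
  qed
  have nz: "1 - cnj \<zeta> * \<zeta> \<noteq> 0"
  proof
    assume "1 - cnj \<zeta> * \<zeta> = 0"
    then have "cnj \<zeta> * \<zeta> = 1" by simp
    then have "norm (cnj \<zeta> * \<zeta>) = 1" by simp
    then have "norm \<zeta> * norm \<zeta> = 1" by (simp add: norm_mult)
    moreover have "norm \<zeta> * norm \<zeta> < 1" using assms(2)
      by (metis mult_less_cancel_right1 mult_less_cancel_left1 norm_ge_zero less_le_trans mult_nonneg_nonneg not_le order.strict_trans2 linorder_not_less mult_le_one less_imp_le)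
    ultimately show False by simp
  qed
  have D: "ip L (OPUC \<alpha> k) (OPUC \<alpha> k) = (if k = 0 then 1 else 1 - cnj \<zeta> * \<zeta>)" for k
  proof (cases k)
    case 0 then show ?thesis unfolding 0 Phi0 ipm using c0 by simp
  next
    case (Suc k')
    show ?thesis unfolding Suc PhiS ipPP using G1[of k' k'] G2[of k' "Suc k'"] by simp
  qed
  have part1: "mu L \<alpha> n 0 k = (if n \<le> k then (if n = k then 1 else 0) else \<zeta> ^ (n - k))" for k
  proof (cases k)
    case 0
    have "ip L (OPUC \<alpha> 0) (monom 1 n * OPUC \<alpha> 0) = \<zeta> ^ n"
      unfolding Phi0 using ipm[of 0 n] cneg[of n] by simp
    then show ?thesis unfolding mu_def using 0 D[of 0] Phi0 by simp
  next
    case (Suc k')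
    have num: "ip L (OPUC \<alpha> k) (monom 1 n * OPUC \<alpha> 0) = ip L (P k') (monom 1 n)"
      unfolding Suc PhiS Phi0 by simp
    show ?thesis
    proof (cases "n \<le> k'")
      case True
      then show ?thesis unfolding mu_def num using G1[OF True] Suc by simp
    next
      case False
      then have "k' < n" by simp
      have "n - k = Suc (n - Suc k') - 1" using Suc False by simp
      then show ?thesis unfolding mu_def num using G2[OF \<open>k' < n\<close>] Suc False D[of k] nz by simp
    qed
  qed
  have part2: "mu L \<alpha> n r s = (if r = 0 then mu L \<alpha> n 0 s else (if s = n + r then 1 else 0))"
  proof (cases r)
    case 0 then show ?thesis by simp
  next
    case (Suc r')
    have zr: "monom 1 n * OPUC \<alpha> r = P (n + r')" unfolding Suc PhiS P_def by (rule monom_mult_BS)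
    show ?thesis
    proof (cases s)
      case 0
      have "ip L (OPUC \<alpha> s) (monom 1 n * OPUC \<alpha> r) = 0"
        unfolding zr 0 Phi0 ipmP
        using cneg[of "Suc (n + r')"] cneg[of "n + r'"] by simp
      then show ?thesis unfolding mu_def using Suc 0 by simp
    next
      case (Suc s')
      have num: "ip L (OPUC \<alpha> s) (monom 1 n * OPUC \<alpha> r) =
        ip L (P s') (monom 1 (Suc (n + r'))) - \<zeta> * ip L (P s') (monom 1 (n + r'))"
        unfolding zr Suc PhiS ipPP ..
      consider "n + r' < s'" | "n + r' = s'" | "s' < n + r'" by linarith
      then show ?thesis
      proof cases
        case 1
        then show ?thesis unfolding mu_def num using G1[of "Suc (n + r')" s'] G1[of "n + r'" s'] \<open>r = Suc r'\<close> Suc by simp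
      next
        case 2
        then show ?thesis unfolding mu_def num using G1[of "n + r'" s'] G2[of s' "Suc (n + r')"] \<open>r = Suc r'\<close> Suc D[of s] nz by simp
      next
        case 3
        have e: "Suc (n + r') - Suc s' = Suc (n + r' - Suc s')" using 3 by simp
        have "ip L (P s') (monom 1 (Suc (n + r'))) - \<zeta> * ip L (P s') (monom 1 (n + r')) = 0"
        proof -
          have "s' < Suc (n + r')" using 3 by simp
          note g = G2[OF this]
          show ?thesis unfolding g G2[OF 3] e by simp
        qed
        then show ?thesis unfolding mu_def num using 3 \<open>r = Suc r'\<close> Suc by simp
      qed
    qed
  qed
  show ?thesis using part1 part2 by blast
qed

end
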